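(* Assume $CA_2$. Then $\omega_1\not\rightarrow(\omega_1,\omega+2)^2_2$; that is, there is $c:[\omega_1]^2\to2$ such that there is no uncountable $0$-monochromatic subset of $\omega_1$ and no $1$-monochromatic subset of $\omega_1$ of order type $\omega+2$.
   Context: A set $Y\subseteq\omega_1$ is $i$-monochromatic for $c$ if $c(\{\alpha,\beta\})=i$ for all distinct $\alpha,\beta\in Y$. A type is a sequence $\tau=\{(m_k,n_{k+1},r_{k+1})\}_{k\in\omega}$ of natural numbers with $m_0=1$; $n_k\ge2$ for $k\ge1$; every $r\in\omega$ equals $r_k$ for infinitely many $k$; $m_k>r_{k+1}$; and $m_{k+1}=r_{k+1}+(m_k-r_{k+1})n_{k+1}$ for all $k$. For a set of ordinals $X$ and $\mathcal F\subseteq[X]^{<\omega}$, $\mathcal F_k$ is the set of elements of rank $k$ in $(\mathcal F,\subsetneq)$; $A\sqsubseteq B$ means $A\subseteq B$ and every element of $B$ below an element of $A$ is in $A$; $A<B$ means every element of $A$ is below every element of $B$. $\mathcal F$ is a construction scheme over $X$ of type $\tau$ if (1) every finite subset of $X$ lies in a member of $\mathcal F$; (2) $|F|=m_k$ for $F\in\mathcal F_k$; (3) $E\cap F\sqsubseteq E,F$ for $E,F\in\mathcal F_k$; (4) each $F\in\mathcal F_{k+1}$ is the union of uniquely determined $F_0,\dots,F_{n_{k+1}-1}\in\mathcal F_k$ forming a $\Delta$-system with root $R(F)$, $|R(F)|=r_{k+1}$, $R(F)<F_0\setminus R(F)<\dots<F_{n_{k+1}-1}\setminus R(F)$. For a construction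 scheme $\mathcal F$ over $\omega_1$, $l\ge1$, $F\in\mathcal F_l$ and finite $\mathcal C\subseteq[\omega_1]^{<\omega}$: $F$ captures $\mathcal C$ if $|\mathcal C|\le n_l$ and $\mathcal C$ can be enumerated as $\{c_i\}_{i<|\mathcal C|}$ with $c_i\subseteq F_i$, $c_i\setminus R(F)\neq\emptyset$ and $\phi_i[c_0]=c_i$ where $\phi_i:F_0\to F_i$ is the increasing bijection. $\mathcal F$ is $n$-capturing if for every uncountable $S\subseteq[\omega_1]^{<\omega}$ and every $k\in\omega$ there are $\mathcal C\in[S]^n$, $l>k$ and $F\in\mathcal F_l$ capturing $\mathcal C$. $CA_n$ is the statement: for every type $\tau$ with $n\le n_k$ for all $k\ge1$ there is an $n$-capturing construction scheme over $\omega_1$ of type $\tau$. *)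

theory Defs
  imports Main "HOL-Library.Countable_Set"
begin

text \<open>A well-ordered type is (isomorphic to) omega_1 iff it is uncountable and every
  proper initial segment is countable.\<close>
definition omega1_type :: "'a::wellorder itself \<Rightarrow> bool" where
  "omega1_type _ \<longleftrightarrow> \<not> countable (UNIV :: 'a set) \<and> (\<forall>x::'a. countable {y. y < x})"

definition set_less :: "'a::linorder set \<Rightarrow> 'a set \<Rightarrow> bool" where
  "set_less A B \<longleftrightarrow> (\<forall>a\<in>A. \<forall>b\<in>B. a < b)"

definition init_seg :: "'a::linorder set \<Rightarrow> 'a set \<Rightarrow> bool" where
  "init_seg A B \<longleftrightarrow> A \<subseteq> B \<and> (\<forall>b\<in>B. \<forall>a\<in>A. b < a \<longrightarrow> b \<in> A)"

lemma image_cong_fundef[fundef_cong]: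
  "M = N \<Longrightarrow> (\<And>x. x \<in> N \<Longrightarrow> f x = g x) \<Longrightarrow> f ` M = g ` N"
  by (rule image_cong)

function frank :: "'a set set \<Rightarrow> 'a set \<Rightarrow> nat" where
  "frank F A = (if finite A
     then Max (insert 0 ((\<lambda>B. Suc (frank F B)) ` {B \<in> F. B \<subset> A})) else 0)"
  by pat_completeness auto
termination
  by (relation "measure (\<lambda>(F, A). card A)") (auto intro: psubset_card_mono)

definition level :: "'a set set \<Rightarrow> nat \<Rightarrow> 'a set set" where
  "level F k = {A \<in> F. frank F A = k}"

text \<open>A type tau = ((m k, n (k+1), r (k+1)))_k ; the values n 0 and r 0 are irrelevant.\<close>
definition is_type :: "(nat \<Rightarrow> nat) \<Rightarrow> (nat \<Rightarrow> nat) \<Rightarrow> (nat \<Rightarrow> nat) \<Rightarrow> bool" where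
  "is_type m n r \<longleftrightarrow>
     m 0 = 1 \<and>
     (\<forall>k\<ge>1. n k \<ge> 2) \<and>
     (\<forall>x. infinite {k. k \<ge> 1 \<and> r k = x}) \<and>
     (\<forall>k. m k > r (Suc k)) \<and>
     (\<forall>k. m (Suc k) = r (Suc k) + (m k - r (Suc k)) * n (Suc k))"

definition decomp :: "'a::linorder set set \<Rightarrow> nat \<Rightarrow> nat \<Rightarrow> 'a set
     \<Rightarrow> (nat \<Rightarrow> 'a set) \<Rightarrow> 'a set \<Rightarrow> bool" where
  "decomp G N rr A Fs R \<longleftrightarrow>
     (\<forall>i<N. Fs i \<in> G) \<and>
     A = (\<Union>i<N. Fs i) \<and>
     (\<forall>i<N. \<forall>j<N. i \<noteq> j \<longrightarrow> Fs i \<inter> Fs j = R) \<and>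
     card R = rr \<and>
     set_less R (Fs 0 - R) \<and>
     (\<forall>i. Suc i < N \<longrightarrow> set_less (Fs i - R) (Fs (Suc i) - R))"

definition construction_scheme :: "'a::linorder set \<Rightarrow> 'a set set
     \<Rightarrow> (nat \<Rightarrow> nat) \<Rightarrow> (nat \<Rightarrow> nat) \<Rightarrow> (nat \<Rightarrow> nat) \<Rightarrow> bool" where
  "construction_scheme X F m n r \<longleftrightarrow>
     (\<forall>A\<in>F. finite A \<and> A \<subseteq> X) \<and>
     (\<forall>A. finite A \<and> A \<subseteq> X \<longrightarrow> (\<exists>B\<in>F. A \<subseteq> B)) \<and>
     (\<forall>k. \<forall>A\<in>level F k. card A = m k) \<and>
     (\<forall>k. \<forall>E\<in>level F k. \<forall>A\<in>level F k. init_seg (E \<inter> A) E \<and> init_seg (E \<inter> A) A) \<and>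
     (\<forall>k. \<forall>A\<in>level F (Suc k).
        \<exists>Fs. (\<exists>R. decomp (level F k) (n (Suc k)) (r (Suc k)) A Fs R) \<and>
          (\<forall>Gs. (\<exists>R. decomp (level F k) (n (Suc k)) (r (Suc k)) A Gs R)
                 \<longrightarrow> (\<forall>i<n (Suc k). Gs i = Fs i)))"

definition captures :: "'a::linorder set set \<Rightarrow> (nat \<Rightarrow> nat) \<Rightarrow> (nat \<Rightarrow> nat) \<Rightarrow> nat
     \<Rightarrow> 'a set \<Rightarrow> 'a set set \<Rightarrow> bool" where
  "captures F n r l A C \<longleftrightarrow>
     l \<ge> 1 \<and> A \<in> level F l \<and> finite C \<and> card C \<le> n l \<and>
     (\<exists>Fs R. decomp (level F (l - 1)) (n l) (r l) A Fs R \<and>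
       (\<exists>cs. bij_betw cs {..<card C} C \<and>
          (\<forall>i<card C. cs i \<subseteq> Fs i \<and> cs i - R \<noteq> {} \<and>
             (\<forall>\<phi>. strict_mono_on (Fs 0) \<phi> \<and> bij_betw \<phi> (Fs 0) (Fs i)
                  \<longrightarrow> \<phi> ` cs 0 = cs i))))"

definition n_capturing :: "nat \<Rightarrow> 'a::linorder set set \<Rightarrow> (nat \<Rightarrow> nat) \<Rightarrow> (nat \<Rightarrow> nat) \<Rightarrow> bool" where
  "n_capturing N F n r \<longleftrightarrow>
     (\<forall>S. (\<forall>s\<in>S. finite s) \<and> \<not> countable S \<longrightarrow>
        (\<forall>k. \<exists>C l A. C \<subseteq> S \<and> finite C \<and> card C = N \<and> l > k \<and> A \<in> level F l \<and>
                 captures F n r l A C))"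

definition CA :: "'a::linorder itself \<Rightarrow> nat \<Rightarrow> bool" where
  "CA _ N \<longleftrightarrow> (\<forall>m n r. is_type m n r \<and> (\<forall>k\<ge>1. N \<le> n k) \<longrightarrow>
       (\<exists>F :: 'a set set. construction_scheme UNIV F m n r \<and> n_capturing N F n r))"

definition monochromatic :: "('a set \<Rightarrow> nat) \<Rightarrow> nat \<Rightarrow> 'a set \<Rightarrow> bool" where
  "monochromatic c i Y \<longleftrightarrow> (\<forall>\<alpha>\<in>Y. \<forall>\<beta>\<in>Y. \<alpha> \<noteq> \<beta> \<longrightarrow> c {\<alpha>, \<beta>} = i)"

text \<open>Y has order type omega+2: it is the image of an order isomorphism from
  omega+2 = {0,1,2,...} \<union> {omega, omega+1}, i.e. Y = range f \<union> {a, b} with f strictly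
  increasing and f k < a < b for all k.\<close>
definition otype_omega_plus_two :: "'a::linorder set \<Rightarrow> bool" where
  "otype_omega_plus_two Y \<longleftrightarrow>
     (\<exists>(f :: nat \<Rightarrow> 'a) a b. strict_mono f \<and> (\<forall>k. f k < a) \<and> a < b \<and> Y = range f \<union> {a, b})"

end

theory Submission
  imports Defs "HOL-Library.Nat_Bijection"
begin


lemma iso_exists:
  fixes A B :: "'a::linorder set"
  assumes fA: "finite A" and fB: "finite B" and cd: "card A = card B"
  shows "\<exists>\<phi>. strict_mono_on A \<phi> \<and> bij_betw \<phi> A B"
proof -
  define xs where "xs = sorted_list_of_set A"
  define ys where "ys = sorted_list_of_set B"
  have sx: "sorted_wrt (<) xs" and sy: "sorted_wrt (<) ys"
    unfolding xs_def ys_def by (simp_all add: strict_sorted_list_of_set)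
  have lx: "length xs = card A" and ly: "length ys = card A"
    unfolding xs_def ys_def using cd by simp_all
  have bx: "bij_betw ((!) xs) {..<card A} A"
    by (rule bij_betw_nth) (use fA lx in \<open>simp_all add: xs_def\<close>)
  have by': "bij_betw ((!) ys) {..<card A} B"
    by (rule bij_betw_nth) (use fB ly in \<open>simp_all add: ys_def\<close>)
  define \<phi> where "\<phi> = ((!) ys) \<circ> inv_into {..<card A} ((!) xs)"
  have bij: "bij_betw \<phi> A B"
    unfolding \<phi>_def by (rule bij_betw_trans[OF bij_betw_inv_into[OF bx] by'])
  have "strict_mono_on A \<phi>"
  proof (rule strict_mono_onI)
    fix x y assume x: "x \<in> A" and y: "y \<in> A" and xy: "x < y"
    define i where "i = inv_into {..<card A} ((!) xs) x"
    define j where "j = inv_into {..<card A} ((!) xs) y"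
    have i: "i < card A" "xs ! i = x"
      using bij_betw_inv_into[OF bx] x bx unfolding i_def
      by (auto simp: bij_betw_def f_inv_into_f)
    have j: "j < card A" "xs ! j = y"
      using bij_betw_inv_into[OF bx] y bx unfolding j_def
      by (auto simp: bij_betw_def f_inv_into_f)
    have "i < j"
    proof (rule ccontr)
      assume "\<not> i < j"
      then have "j < i \<or> j = i" by auto
      then show False
      proof
        assume "j < i" then have "xs ! j < xs ! i" using sorted_wrt_nth_less[OF sx] i lx by auto
        then show False using i j xy by auto
      next
        assume "j = i" then show False using i j xy by auto
      qed
    qed
    then have "ys ! i < ys ! j" using sorted_wrt_nth_less[OF sy] j ly by auto
    then show "\<phi> x < \<phi> y" unfolding \<phi>_def i_def j_def by simp
  qed
  then show ?thesis using bij by blast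
qed

lemma iso_below:
  fixes A B :: "'a::linorder set"
  assumes sm: "strict_mono_on A \<phi>" and bij: "bij_betw \<phi> A B" and x: "x \<in> A"
  shows "card {z\<in>A. z < x} = card {w\<in>B. w < \<phi> x}"
proof -
  have inj: "inj_on \<phi> A" using bij by (simp add: bij_betw_def)
  have img: "\<phi> ` {z\<in>A. z < x} = {w\<in>B. w < \<phi> x}"
  proof
    show "\<phi> ` {z\<in>A. z < x} \<subseteq> {w\<in>B. w < \<phi> x}"
      using sm bij x by (auto simp: strict_mono_on_def bij_betw_def)
  next
    show "{w\<in>B. w < \<phi> x} \<subseteq> \<phi> ` {z\<in>A. z < x}"
    proof
      fix w assume w: "w \<in> {w\<in>B. w < \<phi> x}"
      then obtain z where z: "z \<in> A" "w = \<phi> z" using bij by (auto simp: bij_betw_def)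
      have "z < x"
      proof (rule ccontr)
        assume "\<not> z < x"
        then have "x < z \<or> x = z" by auto
        then have "\<phi> x \<le> \<phi> z" using sm x z by (auto simp: strict_mono_on_def less_imp_le)
        then show False using w z by auto
      qed
      then show "w \<in> \<phi> ` {z\<in>A. z < x}" using z by auto
    qed
  qed
  have "card (\<phi> ` {z\<in>A. z < x}) = card {z\<in>A. z < x}"
    by (rule card_image) (rule inj_on_subset[OF inj], auto)
  then show ?thesis using img by simp
qed

definition rr :: "nat \<Rightarrow> nat" where
  "rr k = (if k = 0 then 0 else fst (prod_decode (k - 1)))"

primrec mm :: "nat \<Rightarrow> nat" where
  "mm 0 = 1"
| "mm (Suc k) = rr (Suc k) + (mm k - rr (Suc k)) * 2"

lemma rr_le: "rr (Suc k) \<le> k"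
proof -
  obtain a b where ab: "prod_decode k = (a, b)" by (cases "prod_decode k")
  have "prod_encode (a, b) = k" using prod_decode_inverse[of k] ab by simp
  then have "a \<le> k" using le_prod_encode_1[of a b] by simp
  then show ?thesis using ab by (simp add: rr_def)
qed

lemma mm_gt: "k < mm k"
proof (induction k)
  case 0 then show ?case by simp
next
  case (Suc k)
  have "rr (Suc k) \<le> k" by (rule rr_le)
  then show ?case using Suc by simp
qed

lemma mm_type: "is_type mm (\<lambda>_. 2) rr"
  unfolding is_type_def
proof (intro conjI allI impI)
  show "mm 0 = 1" by simp
next
  fix k :: nat show "2 \<le> (2::nat)" by simp
next
  fix x :: nat
  show "infinite {k. k \<ge> 1 \<and> rr k = x}"
    unfolding infinite_nat_iff_unbounded_le
  proof
    fix N
    let ?k = "Suc (prod_encode (x, N))"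
    have "N \<le> ?k" using le_prod_encode_2[of N x] by simp
    moreover have "rr ?k = x" by (simp add: rr_def)
    ultimately show "\<exists>k\<ge>N. k \<in> {k. k \<ge> 1 \<and> rr k = x}" by auto
  qed
next
  fix k show "rr (Suc k) < mm k" using rr_le[of k] mm_gt[of k] by simp
next
  fix k show "mm (Suc k) = rr (Suc k) + (mm k - rr (Suc k)) * 2" by simp
qed

lemma mm_smono: "strict_mono mm"
proof -
  have "\<And>k. mm k < mm (Suc k)"
  proof -
    fix k
    have "rr (Suc k) < mm k" using rr_le[of k] mm_gt[of k] by simp
    then show "mm k < mm (Suc k)" by simp
  qed
  then show ?thesis by (simp add: strict_monoI lift_Suc_mono_less)
qed



locale CS =
  fixes F :: "'a::linorder set set" and m r :: "nat \<Rightarrow> nat"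
  assumes cs: "construction_scheme UNIV F m (\<lambda>_. 2) r"
    and mpos: "\<And>k. m k \<ge> 1" and msm: "strict_mono m"
    and inf: "infinite (UNIV :: 'a set)"
begin

lemma lev_F: "A \<in> level F k \<Longrightarrow> A \<in> F" unfolding level_def by simp

lemma csd1: "\<forall>A\<in>F. finite A \<and> A \<subseteq> UNIV"
  using cs unfolding construction_scheme_def by (elim conjE)
lemma csd2: "\<forall>A. finite A \<and> A \<subseteq> UNIV \<longrightarrow> (\<exists>B\<in>F. A \<subseteq> B)"
  using cs unfolding construction_scheme_def by (elim conjE)
lemma csd3: "\<forall>k. \<forall>A\<in>level F k. card A = m k"
  using cs unfolding construction_scheme_def by (elim conjE)
lemma csd4: "\<forall>k. \<forall>E\<in>level F k. \<forall>A\<in>level F k. init_seg (E \<inter> A) E \<and> init_seg (E \<inter> A) A"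
  using cs unfolding construction_scheme_def by (elim conjE)
lemma csd5: "\<forall>k. \<forall>A\<in>level F (Suc k).
        \<exists>Fs. (\<exists>R. decomp (level F k) 2 (r (Suc k)) A Fs R) \<and>
          (\<forall>Gs. (\<exists>R. decomp (level F k) 2 (r (Suc k)) A Gs R)
                 \<longrightarrow> (\<forall>i<2. Gs i = Fs i))"
  using cs unfolding construction_scheme_def by (elim conjE)

lemma lev_finite: "A \<in> level F k \<Longrightarrow> finite A"
  using csd1 lev_F by blast

lemma lev_card: "A \<in> level F k \<Longrightarrow> card A = m k"
  using csd3 by blast

lemma lev_ne: "A \<in> level F k \<Longrightarrow> A \<noteq> {}"
  using lev_card[of A k] mpos[of k] by auto

lemma coh_below:
  assumes "E \<in> level F k" "A \<in> level F k" "x \<in> E" "x \<in> A" "y \<in> E" "y < x"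
  shows "y \<in> A"
proof -
  have "init_seg (E \<inter> A) E" using csd4 assms(1,2) by blast
  then show ?thesis using assms(3-6) unfolding init_seg_def by blast
qed

lemma below_eq:
  assumes "E \<in> level F k" "A \<in> level F k" "x \<in> E" "x \<in> A"
  shows "{z\<in>E. z < x} = {z\<in>A. z < x}"
  using coh_below[OF assms(1,2,3,4)] coh_below[OF assms(2,1,4,3)] by blast

lemma dec: "A \<in> level F (Suc k) \<Longrightarrow> \<exists>Fs R. decomp (level F k) 2 (r (Suc k)) A Fs R"
proof -
  assume "A \<in> level F (Suc k)"
  then obtain Fs where "\<exists>R. decomp (level F k) 2 (r (Suc k)) A Fs R" using csd5 by blast
  then show ?thesis by blast
qed

lemma cover: "finite A \<Longrightarrow> \<exists>B\<in>F. A \<subseteq> B"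
  using csd2 by blast

lemma down:
  "B \<in> level F K \<Longrightarrow> x \<in> B \<Longrightarrow> k \<le> K \<Longrightarrow> \<exists>Q\<in>level F k. x \<in> Q \<and> Q \<subseteq> B"
proof (induction K arbitrary: B)
  case 0 then show ?case by auto
next
  case (Suc K)
  show ?case
  proof (cases "k = Suc K")
    case True then show ?thesis using Suc.prems by auto
  next
    case False
    then have kK: "k \<le> K" using Suc.prems by simp
    obtain Fs R where d: "decomp (level F K) 2 (r (Suc K)) B Fs R" using dec[OF Suc.prems(1)] by blast
    then have "B = (\<Union>i<2. Fs i)" "\<forall>i<2. Fs i \<in> level F K" unfolding decomp_def by auto
    then obtain i where i: "i < 2" "x \<in> Fs i" "Fs i \<in> level F K" "Fs i \<subseteq> B" using Suc.prems(2) by auto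
    then obtain Q where "Q \<in> level F k" "x \<in> Q" "Q \<subseteq> Fs i" using Suc.IH[OF i(3) i(2) kK] by blast
    then show ?thesis using i by blast
  qed
qed

lemma up_in:
  assumes A: "A \<in> level F l" and AB: "A \<subseteq> B" and B: "B \<in> level F K" and lk: "l \<le> k" and kK: "k \<le> K"
  shows "\<exists>C\<in>level F k. A \<subseteq> C \<and> C \<subseteq> B"
proof -
  have fA: "finite A" and neA: "A \<noteq> {}" using lev_finite[OF A] lev_ne[OF A] by auto
  define x where "x = Max A"
  have xA: "x \<in> A" unfolding x_def using fA neA by simp
  obtain Q where Q: "Q \<in> level F k" "x \<in> Q" "Q \<subseteq> B" using down[OF B _ kK] xA AB by blast
  obtain Q' where Q': "Q' \<in> level F l" "x \<in> Q'" "Q' \<subseteq> Q" using down[OF Q(1) Q(2) lk] by blast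
  have "A \<subseteq> Q'"
  proof
    fix a assume a: "a \<in> A"
    have "a \<le> x" unfolding x_def using fA a by simp
    then have "a = x \<or> a < x" by auto
    then show "a \<in> Q'" using coh_below[OF A Q'(1) xA Q'(2) a] Q'(2) by auto
  qed
  then show ?thesis using Q Q' by blast
qed

lemma up:
  assumes A: "A \<in> level F l" and lK: "l \<le> K"
  shows "\<exists>C\<in>level F K. A \<subseteq> C"
proof -
  obtain T :: "'a set" where T: "finite T" "card T = m K" using infinite_arbitrarily_large[OF inf] by blast
  have "finite (A \<union> T)" using T lev_finite[OF A] by simp
  then obtain B0 where B0: "B0 \<in> F" "A \<union> T \<subseteq> B0" using cover by blast
  define K0 where "K0 = frank F B0"
  have B0l: "B0 \<in> level F K0" unfolding level_def K0_def using B0 by simp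
  have "m K \<le> card B0" using T B0 lev_finite[OF B0l] card_mono[of B0 T] by auto
  then have "m K \<le> m K0" using lev_card[OF B0l] by simp
  then have "K \<le> K0" using msm by (simp add: strict_mono_less_eq)
  then obtain C where "C \<in> level F K" "A \<subseteq> C" using up_in[OF A _ B0l lK] B0 by blast
  then show ?thesis by blast
qed

lemma sep:
  assumes P1: "P1 \<in> level F j" and "x \<notin> P1" "z \<in> P1" "x < z"
    and E: "E \<in> level F k" "k \<le> j" "x \<in> E" "z \<in> E"
  shows False
proof -
  obtain E' where E': "E' \<in> level F k" "z \<in> E'" "E' \<subseteq> P1" using down[OF P1 assms(3) E(2)] by blast
  have "x \<in> E'" using coh_below[OF E(1) E'(1) E(4) E'(2) E(3) assms(4)] .
  then show False using E' assms(2) by blast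
qed

definition twin :: "'a \<Rightarrow> 'a \<Rightarrow> bool" where
  "twin \<alpha> \<beta> \<longleftrightarrow> (\<exists>j P0 P1. P0 \<in> level F j \<and> P1 \<in> level F j \<and> \<alpha> \<in> P0 \<and> \<alpha> \<notin> P1 \<and>
      \<beta> \<in> P1 \<and> \<beta> \<notin> P0 \<and> \<alpha> < \<beta> \<and> card {z\<in>P0. z < \<alpha>} = card {z\<in>P1. z < \<beta>} \<and>
      (\<exists>A\<in>level F (Suc j). P0 \<subseteq> A \<and> P1 \<subseteq> A))"

lemma twin_less: "twin \<alpha> \<beta> \<Longrightarrow> \<alpha> < \<beta>" unfolding twin_def by blast

lemma no_omega2:
  assumes A0: "A0 \<in> level F (Suc j0)" "a \<in> A0" "b \<in> A0" "y \<notin> A0" "a < b"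
    and ya: "twin y a" and yb: "twin y b"
  shows False
proof -
  have aA0: "a \<in> A0" and bA0: "b \<in> A0" and yA0: "y \<notin> A0" using A0 by auto
  obtain j1 G0 G1 G where G: "G0 \<in> level F j1" "G1 \<in> level F j1" "y \<in> G0" "y \<notin> G1" "a \<in> G1" "a \<notin> G0"
    "y < a" "card {z\<in>G0. z < y} = card {z\<in>G1. z < a}" "G \<in> level F (Suc j1)" "G0 \<subseteq> G" "G1 \<subseteq> G"
    using ya unfolding twin_def by blast
  obtain j2 H0 H1 H where H: "H0 \<in> level F j2" "H1 \<in> level F j2" "y \<in> H0" "y \<notin> H1" "b \<in> H1" "b \<notin> H0"
    "y < b" "card {z\<in>H0. z < y} = card {z\<in>H1. z < b}" "H \<in> level F (Suc j2)" "H0 \<subseteq> H" "H1 \<subseteq> H"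
    using yb unfolding twin_def by blast
  have j01: "j0 < j1"
  proof (rule ccontr)
    assume "\<not> j0 < j1"
    then have "Suc j1 \<le> Suc j0" by simp
    then obtain C where C: "C \<in> level F (Suc j0)" "G \<subseteq> C" using up[OF G(9)] by blast
    have "y \<in> A0" using coh_below[OF C(1) A0(1) _ aA0 _ G(7)] C(2) G by blast
    then show False using yA0 by simp
  qed
  have j02: "j0 < j2"
  proof (rule ccontr)
    assume "\<not> j0 < j2"
    then have "Suc j2 \<le> Suc j0" by simp
    then obtain C where C: "C \<in> level F (Suc j0)" "H \<subseteq> C" using up[OF H(9)] by blast
    have "y \<in> A0" using coh_below[OF C(1) A0(1) _ bA0 _ H(7)] C(2) H by blast
    then show False using yA0 by simp
  qed
  consider "j1 < j2" | "j2 < j1" | "j1 = j2" by linarith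
  then show False
  proof cases
    case 1
    obtain C where C: "C \<in> level F (Suc j1)" "A0 \<subseteq> C" using up[OF A0(1), of "Suc j1"] j01 by auto
    have yC: "y \<in> C" using coh_below[OF G(9) C(1) _ _ _ G(7)] C(2) aA0 G by blast
    show False using sep[OF H(2) H(4) H(5) H(7) C(1) _ yC] 1 C(2) bA0 by auto
  next
    case 2
    obtain C where C: "C \<in> level F (Suc j2)" "A0 \<subseteq> C" using up[OF A0(1), of "Suc j2"] j02 by auto
    have yC: "y \<in> C" using coh_below[OF H(9) C(1) _ _ _ H(7)] C(2) bA0 H by blast
    show False using sep[OF G(2) G(4) G(5) G(7) C(1) _ yC] 2 C(2) aA0 by auto
  next
    case 3
    obtain C where C: "C \<in> level F j1" "A0 \<subseteq> C" using up[OF A0(1), of j1] j01 by auto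
    have aC: "a \<in> C" and bC: "b \<in> C" using C aA0 bA0 by auto
    have H': "H0 \<in> level F j1" "H1 \<in> level F j1" using H 3 by auto
    have e1: "{z\<in>G0. z < y} = {z\<in>H0. z < y}" using below_eq[OF G(1) H'(1) G(3) H(3)] .
    have e2: "{z\<in>G1. z < a} = {z\<in>C. z < a}" using below_eq[OF G(2) C(1) G(5) aC] .
    have e3: "{z\<in>H1. z < b} = {z\<in>C. z < b}" using below_eq[OF H'(2) C(1) H(5) bC] .
    have eq: "card {z\<in>C. z < a} = card {z\<in>C. z < b}" using G(8) H(8) e1 e2 e3 by simp
    have "{z\<in>C. z < a} \<subset> {z\<in>C. z < b}" using aC A0(5) by auto
    then have "card {z\<in>C. z < a} < card {z\<in>C. z < b}"
      using lev_finite[OF C(1)] by (intro psubset_card_mono) auto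
    then show False using eq by simp
  qed
qed

lemma no_omega2_main:
  assumes ab: "twin a b" and f: "strict_mono (f :: nat \<Rightarrow> 'a)"
    and fa: "\<And>i. twin (f i) a" and fb: "\<And>i. twin (f i) b"
  shows False
proof -
  obtain j0 Q0 Q1 A0 where A0: "A0 \<in> level F (Suc j0)" "Q0 \<subseteq> A0" "Q1 \<subseteq> A0" "a \<in> Q0" "b \<in> Q1" "a < b"
    using ab unfolding twin_def by blast
  have "infinite (range f)"
    using f by (metis finite_imageD infinite_UNIV_nat strict_mono_imp_inj_on)
  then obtain i where "f i \<notin> A0" using lev_finite[OF A0(1)]
    by (metis finite_subset image_subsetI)
  then show False using no_omega2[OF A0(1) _ _ _ A0(6) fa fb] A0 by blast
qed

lemma c1_twin:
  assumes "p < q" and "\<exists>\<alpha> \<beta>. {p, q} = {\<alpha>, \<beta>} \<and> twin \<alpha> \<beta>"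
  shows "twin p q"
proof -
  obtain \<alpha> \<beta> where e: "{p, q} = {\<alpha>, \<beta>}" and t: "twin \<alpha> \<beta>" using assms(2) by blast
  have "\<alpha> < \<beta>" using twin_less[OF t] .
  then have "p = \<alpha> \<and> q = \<beta>" using e assms(1) by (auto simp: doubleton_eq_iff)
  then show ?thesis using t by simp
qed

lemma capture_twin:
  assumes nc: "n_capturing 2 F (\<lambda>_. 2) r" and Y: "\<not> countable Y"
  shows "\<exists>\<alpha>\<in>Y. \<exists>\<beta>\<in>Y. twin \<alpha> \<beta>"
proof -
  define S where "S = (\<lambda>y. {y}) ` Y"
  have "\<not> countable S"
  proof
    assume "countable S"
    then have "countable Y" unfolding S_def by (rule countable_image_inj_on) (auto simp: inj_on_def)
    then show False using Y by simp
  qed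
  moreover have "\<forall>s\<in>S. finite s" unfolding S_def by auto
  ultimately have "\<exists>C l A. C \<subseteq> S \<and> finite C \<and> card C = 2 \<and> l > 0 \<and> A \<in> level F l \<and>
                 captures F (\<lambda>_. 2) r l A C"
    using nc[unfolded n_capturing_def, rule_format, of S 0] by blast
  then obtain C l A where C: "C \<subseteq> S" "card C = 2" "l > 0" "A \<in> level F l"
      "captures F (\<lambda>_. 2) r l A C"
    by blast
  then obtain Fs R cs where d: "decomp (level F (l - 1)) 2 (r l) A Fs R"
    and csb: "bij_betw cs {..<2} C"
    and csp: "\<forall>i<2. cs i \<subseteq> Fs i \<and> cs i - R \<noteq> {} \<and>
             (\<forall>\<phi>. strict_mono_on (Fs 0) \<phi> \<and> bij_betw \<phi> (Fs 0) (Fs i)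
                  \<longrightarrow> \<phi> ` cs 0 = cs i)"
  proof -
    have "\<exists>Fs R. decomp (level F (l - 1)) 2 (r l) A Fs R \<and>
       (\<exists>cs. bij_betw cs {..<card C} C \<and>
          (\<forall>i<card C. cs i \<subseteq> Fs i \<and> cs i - R \<noteq> {} \<and>
             (\<forall>\<phi>. strict_mono_on (Fs 0) \<phi> \<and> bij_betw \<phi> (Fs 0) (Fs i)
                  \<longrightarrow> \<phi> ` cs 0 = cs i)))"
      using C(5) unfolding captures_def by (elim conjE)
    then show ?thesis using that C(2) by (elim exE conjE) simp
  qed
  have "cs 0 \<in> C" "cs 1 \<in> C" using csb by (auto simp: bij_betw_def)
  then have "cs 0 \<in> S" "cs 1 \<in> S" using C(1) by auto
  then obtain \<alpha> \<beta> where ab: "\<alpha> \<in> Y" "\<beta> \<in> Y" "cs 0 = {\<alpha>}" "cs 1 = {\<beta>}"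
    unfolding S_def by blast
  have c0: "cs 0 \<subseteq> Fs 0" "cs 0 - R \<noteq> {}" using csp by auto
  have c1: "cs 1 \<subseteq> Fs 1" "cs 1 - R \<noteq> {}"
    and ph: "\<forall>\<phi>. strict_mono_on (Fs 0) \<phi> \<and> bij_betw \<phi> (Fs 0) (Fs 1) \<longrightarrow> \<phi> ` cs 0 = cs 1"
    using csp by auto
  have dd: "\<forall>i<2. Fs i \<in> level F (l - 1)" "A = (\<Union>i<2. Fs i)"
    "Fs 0 \<inter> Fs 1 = R" "set_less (Fs 0 - R) (Fs 1 - R)"
    using d unfolding decomp_def by auto
  have a0: "\<alpha> \<in> Fs 0" "\<alpha> \<notin> R" using c0 ab by auto
  have b1: "\<beta> \<in> Fs 1" "\<beta> \<notin> R" using c1 ab by auto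
  have a1: "\<alpha> \<notin> Fs 1" using a0 dd(3) by auto
  have b0: "\<beta> \<notin> Fs 0" using b1 dd(3) by auto
  have lt: "\<alpha> < \<beta>" using dd(4) a0 b1 unfolding set_less_def by auto
  have L0: "Fs 0 \<in> level F (l - 1)" and L1: "Fs 1 \<in> level F (l - 1)" using dd(1) by auto
  have "card (Fs 0) = card (Fs 1)" using lev_card[OF L0] lev_card[OF L1] by simp
  then obtain \<phi> where phi: "strict_mono_on (Fs 0) \<phi>" "bij_betw \<phi> (Fs 0) (Fs 1)"
    using iso_exists lev_finite[OF L0] lev_finite[OF L1] by blast
  have "\<phi> ` {\<alpha>} = {\<beta>}" using ph phi ab by auto
  then have pa: "\<phi> \<alpha> = \<beta>" by simp
  have cd: "card {z\<in>Fs 0. z < \<alpha>} = card {z\<in>Fs 1. z < \<beta>}"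
    using iso_below[OF phi a0(1)] pa by simp
  have Al: "A \<in> level F (Suc (l - 1))" using C(3,4) by simp
  have sub: "Fs 0 \<subseteq> A" "Fs 1 \<subseteq> A" using dd(2) by auto
  have "twin \<alpha> \<beta>" unfolding twin_def
    apply (rule exI[of _ "l - 1"], rule exI[of _ "Fs 0"], rule exI[of _ "Fs 1"])
    using L0 L1 a0(1) a1 b1(1) b0 lt cd Al sub by blast
  then show ?thesis using ab by blast
qed

end


theorem mainTheorem10:
  assumes "omega1_type TYPE('a::wellorder)"
    and "CA TYPE('a) 2"
  shows "\<exists>c :: 'a set \<Rightarrow> nat.
           (\<forall>\<alpha> \<beta>. \<alpha> \<noteq> \<beta> \<longrightarrow> c {\<alpha>, \<beta>} < 2) \<and>
           \<not> (\<exists>Y. \<not> countable Y \<and> monochromatic c 0 Y) \<and>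
           \<not> (\<exists>Y. otype_omega_plus_two Y \<and> monochromatic c 1 Y)"
proof -
  have inf: "infinite (UNIV :: 'a set)"
    using assms(1) unfolding omega1_type_def by (auto dest: countable_finite)
  have "\<exists>F :: 'a set set. construction_scheme UNIV F mm (\<lambda>_. 2) rr \<and> n_capturing 2 F (\<lambda>_. 2) rr"
    using assms(2)[unfolded CA_def, rule_format, of mm "\<lambda>_. 2" rr] mm_type by simp
  then obtain F :: "'a set set" where F: "construction_scheme UNIV F mm (\<lambda>_. 2) rr"
    "n_capturing 2 F (\<lambda>_. 2) rr" by blast
  have mp: "\<And>k. 1 \<le> mm k" proof -
    fix k have "k < mm k" by (rule mm_gt)
    then show "1 \<le> mm k" by simp
  qed
  interpret CS F mm rr
    by (rule CS.intro[OF F(1) mp mm_smono inf])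
  define c where "c = (\<lambda>s::'a set. if \<exists>\<alpha> \<beta>. s = {\<alpha>, \<beta>} \<and> twin \<alpha> \<beta> then 1 else (0::nat))"
  have c1: "twin p q" if "p < q" "c {p, q} = 1" for p q
  proof -
    have "\<exists>\<alpha> \<beta>. {p, q} = {\<alpha>, \<beta>} \<and> twin \<alpha> \<beta>"
    proof (rule ccontr)
      assume "\<not> (\<exists>\<alpha> \<beta>. {p, q} = {\<alpha>, \<beta>} \<and> twin \<alpha> \<beta>)"
      then have "c {p, q} = 0" unfolding c_def by simp
      then show False using that(2) by simp
    qed
    then show ?thesis using c1_twin[OF that(1)] by blast
  qed
  show ?thesis
  proof (intro exI conjI)
    show "\<forall>\<alpha> \<beta>. \<alpha> \<noteq> \<beta> \<longrightarrow> c {\<alpha>, \<beta>} < 2" by (simp add: c_def)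
  next
    show "\<not> (\<exists>Y. \<not> countable Y \<and> monochromatic c 0 Y)"
    proof
      assume "\<exists>Y. \<not> countable Y \<and> monochromatic c 0 Y"
      then obtain Y where Y: "\<not> countable Y" "monochromatic c 0 Y" by blast
      obtain \<alpha> \<beta> where ab: "\<alpha> \<in> Y" "\<beta> \<in> Y" "twin \<alpha> \<beta>" using capture_twin[OF F(2) Y(1)] by blast
      have ne: "\<alpha> \<noteq> \<beta>" using twin_less[OF ab(3)] by simp
      have "c {\<alpha>, \<beta>} = 0" using Y(2) ab ne unfolding monochromatic_def by blast
      moreover have "c {\<alpha>, \<beta>} = 1" unfolding c_def using ab(3) by auto
      ultimately show False by simp
    qed
  next
    show "\<not> (\<exists>Y. otype_omega_plus_two Y \<and> monochromatic c 1 Y)"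
    proof
      assume "\<exists>Y. otype_omega_plus_two Y \<and> monochromatic c 1 Y"
      then obtain Y f a b where Y: "strict_mono (f :: nat \<Rightarrow> 'a)" "\<And>k. f k < a" "a < b"
        "Y = range f \<union> {a, b}" "monochromatic c 1 Y"
        unfolding otype_omega_plus_two_def by blast
      have m: "c {x, y} = 1" if "x \<in> Y" "y \<in> Y" "x \<noteq> y" for x y
        using Y(5) that unfolding monochromatic_def by blast
      have ab: "twin a b" using c1[OF Y(3) m] Y(3,4) by auto
      have fa: "twin (f i) a" for i using c1[OF Y(2)[of i] m] Y(2)[of i] Y(4) by auto
      have fb: "twin (f i) b" for i
      proof -
        have "f i < b" using Y(2)[of i] Y(3) by (rule less_trans)
        then show ?thesis using c1[OF _ m] Y(4) by auto
      qed
      show False using no_omega2_main[OF ab Y(1) fa fb] .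
    qed
  qed
qed

end
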